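(* Let $n$ be large, let $d$ satisfy $10\le d\le 10\log n$, and let $G$ be a graph on $n$ vertices (e.g. a realisation of $G(n,d/n)$) satisfying the following properties: (i) $G$ has at most $dn$ edges; (ii) $|\Gamma_i(x,G)|\le (2d)^i\log n$ for every $x\in V(G)$ and $i\le n$; (iii) every set of $i\le\sqrt{n}$ vertices spans at most $2i$ edges, and every set of $i\le 10\log\log n$ vertices spans at most $i$ edges; (iv) for every subgraph $G'$ of $G$ with minimum degree at least $10$, $|\Gamma_i(x,G')|\ge 2^i$ for every $x\in V(G')$ and $1\le i\le 10\log\log n$; (v) with $l=3\log\log n$: for every subgraph $G'$ of $G$ obtained by deleting at most $20d\log n$ vertices and edges and every $x,y\in V(G')$ with $|B_l(x,G')|,|B_l(y,G')|\ge(\log n)^3$, there is a path of length at most $2\log n$ between $x$ and $y$ in $G'$. Let $H$ be the $15$-core of $G$. Let $S_1,\dots,S_d$ be vertex-disjoint paths of length at most $d$ in $H$, let $l=3\log\log n$, and assume that $B_l(x,G)\cap B_l(y,G)=\emptyset$ for every $x\in V(S_i)$, $y\in V(S_j)$ with $i\ne j$. For each $i$ select an edge $e_i=x_iy_i$ of $S_i$ and set $M=\{e_1,\dots,e_d\}$. Then there exists a path in $G$ containing all the edges of $M$ and no other edge of $\bigcup_{1\le i\le d}E(S_i)$.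
   Context: For a graph $F$, a vertex $v$ and integer $i\ge0$, $B_i(v,F)$ is the set of vertices at distance at most $i$ from $v$ in $F$ and $\Gamma_i(v,F)=B_i(v,F)\setminus B_{i-1}(v,F)$. The $k$-core of a graph is its largest induced subgraph with minimum degree at least $k$. Floors and ceilings are omitted, so $d$ and $l$ are treated as integers. *)

theory Defs
  imports Complex_Main
begin

definition is_graph :: "nat set \<Rightarrow> nat set set \<Rightarrow> bool" where
  "is_graph V E \<longleftrightarrow> finite V \<and> (\<forall>e\<in>E. \<exists>u v. u \<noteq> v \<and> u \<in> V \<and> v \<in> V \<and> e = {u, v})"

definition is_path :: "nat set \<Rightarrow> nat set set \<Rightarrow> nat list \<Rightarrow> bool" where
  "is_path V E p \<longleftrightarrow> p \<noteq> [] \<and> distinct p \<and> set p \<subseteq> V \<and>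
     (\<forall>k. Suc k < length p \<longrightarrow> {p ! k, p ! Suc k} \<in> E)"

definition plen :: "nat list \<Rightarrow> nat" where
  "plen p = length p - 1"

definition path_edges :: "nat list \<Rightarrow> nat set set" where
  "path_edges p = {{p ! k, p ! Suc k} | k. Suc k < length p}"

definition ball :: "nat set \<Rightarrow> nat set set \<Rightarrow> nat \<Rightarrow> nat \<Rightarrow> nat set" where
  "ball V E v i = {u. \<exists>p. is_path V E p \<and> hd p = v \<and> last p = u \<and> plen p \<le> i}"

definition sphere :: "nat set \<Rightarrow> nat set set \<Rightarrow> nat \<Rightarrow> nat \<Rightarrow> nat set" where
  "sphere V E v i = ball V E v i - (if i = 0 then {} else ball V E v (i - 1))"

definition degree :: "nat set set \<Rightarrow> nat \<Rightarrow> nat" where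
  "degree E v = card {e \<in> E. v \<in> e}"

definition min_deg_ge :: "nat set \<Rightarrow> nat set set \<Rightarrow> nat \<Rightarrow> bool" where
  "min_deg_ge V E k \<longleftrightarrow> (\<forall>v\<in>V. k \<le> degree E v)"

definition induced :: "nat set set \<Rightarrow> nat set \<Rightarrow> nat set set" where
  "induced E U = {e \<in> E. e \<subseteq> U}"

definition spans :: "nat set set \<Rightarrow> nat set \<Rightarrow> nat" where
  "spans E U = card {e \<in> E. e \<subseteq> U}"

definition subgraph :: "nat set \<Rightarrow> nat set set \<Rightarrow> nat set \<Rightarrow> nat set set \<Rightarrow> bool" where
  "subgraph V' E' V E \<longleftrightarrow> V' \<subseteq> V \<and> E' \<subseteq> E \<and> (\<forall>e\<in>E'. e \<subseteq> V')"

text \<open>Vertex set of the k-core: the largest vertex set inducing a subgraph of minimum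
  degree at least k (the union of all such sets, which again has this property).\<close>
definition core_vertices :: "nat set \<Rightarrow> nat set set \<Rightarrow> nat \<Rightarrow> nat set" where
  "core_vertices V E k = \<Union>{W. W \<subseteq> V \<and> min_deg_ge W (induced E W) k}"

definition lpar :: "nat \<Rightarrow> nat" where
  "lpar n = nat \<lfloor>3 * ln (ln (real n))\<rfloor>"

end

theory Submission
  imports Defs "HOL-Real_Asymp.Real_Asymp"
begin


lemma is_path_single[simp]: "is_path V E [a] \<longleftrightarrow> a \<in> V"
  unfolding is_path_def by auto

lemma is_path_Cons2: "is_path V E (a # b # xs) \<longleftrightarrow>
   a \<in> V \<and> a \<notin> set (b # xs) \<and> {a, b} \<in> E \<and> is_path V E (b # xs)"
proof
  assume H: "is_path V E (a # b # xs)"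
  have "\<forall>k. Suc k < length (b # xs) \<longrightarrow> {(b # xs) ! k, (b # xs) ! Suc k} \<in> E"
  proof (intro allI impI)
    fix k assume "Suc k < length (b # xs)"
    then have "Suc (Suc k) < length (a # b # xs)" by simp
    with H show "{(b # xs) ! k, (b # xs) ! Suc k} \<in> E" unfolding is_path_def
      by (metis nth_Cons_Suc)
  qed
  moreover have "{a, b} \<in> E" using H unfolding is_path_def
    by (metis length_Cons nth_Cons_0 nth_Cons_Suc zero_less_Suc Suc_less_eq)
  ultimately show "a \<in> V \<and> a \<notin> set (b # xs) \<and> {a, b} \<in> E \<and> is_path V E (b # xs)"
    using H unfolding is_path_def by auto
next
  assume H: "a \<in> V \<and> a \<notin> set (b # xs) \<and> {a, b} \<in> E \<and> is_path V E (b # xs)"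
  have "\<forall>k. Suc k < length (a # b # xs) \<longrightarrow> {(a # b # xs) ! k, (a # b # xs) ! Suc k} \<in> E"
  proof (intro allI impI)
    fix k assume k: "Suc k < length (a # b # xs)"
    show "{(a # b # xs) ! k, (a # b # xs) ! Suc k} \<in> E"
    proof (cases k)
      case 0 then show ?thesis using H by simp
    next
      case (Suc j)
      then have "Suc j < length (b # xs)" using k by simp
      then show ?thesis using H Suc unfolding is_path_def by simp
    qed
  qed
  then show "is_path V E (a # b # xs)" using H unfolding is_path_def by auto
qed

lemma path_edges_Nil[simp]: "path_edges [] = {}"
  unfolding path_edges_def by auto

lemma path_edges_single[simp]: "path_edges [a] = {}"
  unfolding path_edges_def by auto

lemma path_edges_Cons2: "path_edges (a # b # xs) = insert {a, b} (path_edges (b # xs))"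
proof
  show "path_edges (a # b # xs) \<subseteq> insert {a, b} (path_edges (b # xs))"
  proof
    fix f assume "f \<in> path_edges (a # b # xs)"
    then obtain k where k: "f = {(a # b # xs) ! k, (a # b # xs) ! Suc k}" "Suc k < length (a # b # xs)"
      unfolding path_edges_def by auto
    show "f \<in> insert {a, b} (path_edges (b # xs))"
    proof (cases k)
      case 0 then show ?thesis using k by simp
    next
      case (Suc j) then show ?thesis using k unfolding path_edges_def by auto
    qed
  qed
next
  show "insert {a, b} (path_edges (b # xs)) \<subseteq> path_edges (a # b # xs)"
  proof
    fix f assume "f \<in> insert {a, b} (path_edges (b # xs))"
    then consider "f = {a, b}" | "f \<in> path_edges (b # xs)" by blast
    then show "f \<in> path_edges (a # b # xs)"
    proof cases
      case 1 then show ?thesis unfolding path_edges_def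
        by (auto intro!: exI[of _ 0])
    next
      case 2
      then obtain k where k: "f = {(b # xs) ! k, (b # xs) ! Suc k}" "Suc k < length (b # xs)"
        unfolding path_edges_def by auto
      then show ?thesis unfolding path_edges_def
        by (auto intro!: exI[of _ "Suc k"])
    qed
  qed
qed

lemma path_edges_finite[simp]: "finite (path_edges p)"
proof -
  have "path_edges p = (\<lambda>k. {p ! k, p ! Suc k}) ` {k. Suc k < length p}"
    unfolding path_edges_def by auto
  moreover have "finite {k. Suc k < length p}"
    by (rule finite_subset[of _ "{..<length p}"]) auto
  ultimately show ?thesis by simp
qed

lemma path_edges_subset_set: "f \<in> path_edges p \<Longrightarrow> f \<subseteq> set p"
  unfolding path_edges_def by auto

lemma path_edges_in_E: "is_path V E p \<Longrightarrow> path_edges p \<subseteq> E"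
  unfolding is_path_def path_edges_def by auto

lemma path_set_V: "is_path V E p \<Longrightarrow> set p \<subseteq> V"
  unfolding is_path_def by auto

lemma path_ne: "is_path V E p \<Longrightarrow> p \<noteq> []"
  unfolding is_path_def by auto

lemma path_distinct: "is_path V E p \<Longrightarrow> distinct p"
  unfolding is_path_def by auto

lemma path_mono: "is_path V' E' p \<Longrightarrow> V' \<subseteq> V \<Longrightarrow> E' \<subseteq> E \<Longrightarrow> is_path V E p"
  unfolding is_path_def by auto

lemma path_edges_card: "is_path V E p \<Longrightarrow> card (path_edges p) = length p - 1"
proof (induction p rule: induct_list012)
  case 1 then show ?case by simp
next
  case (2 x) then show ?case by simp
next
  case (3 x y zs)
  have P: "x \<notin> set (y # zs)" "is_path V E (y # zs)" using 3(3) is_path_Cons2 by auto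
  have "{x, y} \<notin> path_edges (y # zs)" using P(1) path_edges_subset_set by blast
  then show ?case using 3(2)[OF P(2)] by (simp add: path_edges_Cons2)
qed

lemma path_edges_deg: "distinct p \<Longrightarrow>
   card {f \<in> path_edges p. v \<in> f} \<le> (if v = hd p then 1 else 2)"
proof (induction p rule: induct_list012)
  case 1 then show ?case by simp
next
  case (2 x) then show ?case by simp
next
  case (3 x y zs)
  have IH: "card {f \<in> path_edges (y # zs). v \<in> f} \<le> (if v = y then 1 else 2)"
    using 3 by simp
  have eq: "{f \<in> path_edges (x # y # zs). v \<in> f} =
        (if v \<in> {x, y} then insert {x, y} {f \<in> path_edges (y # zs). v \<in> f}
         else {f \<in> path_edges (y # zs). v \<in> f})"
    by (auto simp: path_edges_Cons2)
  show ?case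
  proof (cases "v = x")
    case True
    have xn: "x \<notin> set (y # zs)" using 3(3) by simp
    have emp: "{f \<in> path_edges (y # zs). x \<in> f} = {}"
      using xn path_edges_subset_set by blast
    have E1: "{f \<in> path_edges (x # y # zs). v \<in> f} = insert {x, y} {f \<in> path_edges (y # zs). x \<in> f}"
      using True eq by simp
    then have "{f \<in> path_edges (x # y # zs). v \<in> f} = {{x, y}}" unfolding emp .
    then show ?thesis using True by simp
  next
    case False
    have "card (insert {x, y} {f \<in> path_edges (y # zs). v \<in> f}) \<le>
          Suc (card {f \<in> path_edges (y # zs). v \<in> f})"
      by (simp add: card_insert_le_m1)
    then show ?thesis using False eq IH by (auto split: if_splits)
  qed
qed

lemma path_join:
  assumes "is_path V E p" "is_path V E q" "last p = hd q" "set p \<inter> set q \<subseteq> {hd q}"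
  shows "is_path V E (p @ tl q) \<and> path_edges (p @ tl q) = path_edges p \<union> path_edges q"
  using assms
proof (induction p rule: induct_list012)
  case 1 then show ?case by (simp add: is_path_def)
next
  case (2 x)
  then have "q = x # tl q" using path_ne by (metis list.collapse last_ConsL)
  then show ?case using 2 by (metis append_Cons append_Nil path_edges_single sup_bot.left_neutral)
next
  case (3 x y zs)
  have P: "x \<in> V" "x \<notin> set (y # zs)" "{x, y} \<in> E" "is_path V E (y # zs)"
    using 3(3) is_path_Cons2 by auto
  have IH: "is_path V E ((y # zs) @ tl q) \<and> path_edges ((y # zs) @ tl q) = path_edges (y # zs) \<union> path_edges q"
    using 3(2)[OF P(4) 3(4)] 3(5,6) by auto
  have "last (y # zs) \<in> set (y # zs)" by simp
  then have "hd q \<noteq> x" using 3(5) P(2) by auto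
  then have "x \<notin> set q" using 3(6) by auto
  then have "x \<notin> set (tl q)" by (cases q) auto
  then have xn: "x \<notin> set (y # zs @ tl q)" using P(2) by auto
  have "is_path V E (x # y # (zs @ tl q))"
    using is_path_Cons2 P IH xn by simp
  moreover have "path_edges (x # y # (zs @ tl q)) = path_edges (x # y # zs) \<union> path_edges q"
    using IH by (simp add: path_edges_Cons2)
  ultimately show ?case by simp
qed

lemma last_join: "q \<noteq> [] \<Longrightarrow> last p = hd q \<Longrightarrow> p \<noteq> [] \<Longrightarrow> last (p @ tl q) = last q"
  by (cases q) auto

lemma hd_join: "p \<noteq> [] \<Longrightarrow> hd (p @ tl q) = hd p"
  by simp

lemma set_join: "q \<noteq> [] \<Longrightarrow> last p = hd q \<Longrightarrow> p \<noteq> [] \<Longrightarrow> set (p @ tl q) = set p \<union> set q"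
proof (cases q)
  case (Cons a qs)
  assume "last p = hd q" "p \<noteq> []"
  then have "a \<in> set p" using Cons last_in_set by fastforce
  then show ?thesis using Cons by auto
qed simp

lemma path_take: "is_path V E p \<Longrightarrow> 0 < m \<Longrightarrow> is_path V E (take m p)"
  unfolding is_path_def by (auto dest: in_set_takeD)

lemma path_edges_take: "path_edges (take m p) \<subseteq> path_edges p"
  unfolding path_edges_def by force

lemma path_drop: "is_path V E p \<Longrightarrow> m < length p \<Longrightarrow> is_path V E (drop m p)"
  unfolding is_path_def by (auto dest: in_set_dropD)

lemma path_rev: "is_path V E p \<Longrightarrow> is_path V E (rev p)"
  unfolding is_path_def
proof (intro conjI allI impI)
  fix k assume H: "p \<noteq> [] \<and> distinct p \<and> set p \<subseteq> V \<and> (\<forall>k. Suc k < length p \<longrightarrow> {p ! k, p ! Suc k} \<in> E)"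
    and k: "Suc k < length (rev p)"
  define j where "j = length p - Suc (Suc k)"
  have "Suc j < length p" using k unfolding j_def by auto
  then have "{p ! j, p ! Suc j} \<in> E" using H by auto
  moreover have "rev p ! k = p ! Suc j" "rev p ! Suc k = p ! j"
    using k unfolding j_def by (auto simp: rev_nth Suc_diff_Suc)
  ultimately show "{rev p ! k, rev p ! Suc k} \<in> E" by (simp add: insert_commute)
qed auto

lemma path_edges_rev: "path_edges (rev p) \<subseteq> path_edges p"
proof
  fix f assume "f \<in> path_edges (rev p)"
  then obtain k where k: "f = {rev p ! k, rev p ! Suc k}" "Suc k < length p"
    unfolding path_edges_def by auto
  define j where "j = length p - Suc (Suc k)"
  have "Suc j < length p" using k unfolding j_def by auto
  moreover have "rev p ! k = p ! Suc j" "rev p ! Suc k = p ! j"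
    using k unfolding j_def by (auto simp: rev_nth Suc_diff_Suc)
  ultimately show "f \<in> path_edges p" using k unfolding path_edges_def
    by (auto simp: insert_commute)
qed

lemma ball_mono: "V' \<subseteq> V \<Longrightarrow> E' \<subseteq> E \<Longrightarrow> ball V' E' v i \<subseteq> ball V E v i"
  unfolding ball_def using path_mono by blast

lemma ball_radius_mono: "i \<le> j \<Longrightarrow> ball V E v i \<subseteq> ball V E v j"
  unfolding ball_def by force

lemma ball_self: "v \<in> V \<Longrightarrow> v \<in> ball V E v i"
  unfolding ball_def plen_def by (auto intro!: exI[of _ "[v]"])

lemma ball_sub: "ball V E v i \<subseteq> V"
  unfolding ball_def using path_set_V by (fastforce dest: last_in_set path_ne)

lemma ball_ext:
  assumes u: "u \<in> ball V E r k" and uw: "{u, w} \<in> E" and w: "w \<in> V"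
  shows "w \<in> ball V E r (Suc k)"
proof -
  obtain p where p: "is_path V E p" "hd p = r" "last p = u" "plen p \<le> k"
    using u unfolding ball_def by auto
  have pne: "p \<noteq> []" using p path_ne by auto
  show ?thesis
  proof (cases "w \<in> set p")
    case True
    then obtain a where a: "a < length p" "p ! a = w" by (auto simp: in_set_conv_nth)
    have "is_path V E (take (Suc a) p)" using path_take p by auto
    moreover have "hd (take (Suc a) p) = r" using p pne by simp
    moreover have "last (take (Suc a) p) = w"
    proof -
      have "take (Suc a) p = take a p @ [p ! a]" using a(1) by (rule take_Suc_conv_app_nth)
      then show ?thesis using a(2) by simp
    qed
    moreover have "plen (take (Suc a) p) \<le> Suc k" using a p unfolding plen_def by auto
    ultimately show ?thesis unfolding ball_def mem_Collect_eq
      by (intro exI[of _ "take (Suc a) p"] conjI)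
  next
    case False
    have uV: "u \<in> V" using p pne path_set_V last_in_set by blast
    have "u \<noteq> w" using False p pne last_in_set by blast
    then have q: "is_path V E [u, w]" using is_path_Cons2 uV w uw by auto
    have "set p \<inter> set [u, w] \<subseteq> {hd [u, w]}" using False by auto
    then have "is_path V E (p @ tl [u, w])" using path_join[OF p(1) q] p by auto
    moreover have "hd (p @ tl [u, w]) = r" using p pne by simp
    moreover have "last (p @ tl [u, w]) = w" by simp
    moreover have "plen (p @ tl [u, w]) \<le> Suc k" using p pne unfolding plen_def by auto
    ultimately show ?thesis unfolding ball_def mem_Collect_eq
      by (intro exI[of _ "p @ tl [u, w]"] conjI)
  qed
qed



lemma double_count:
  assumes "finite A" "finite B"
  shows "(\<Sum>a\<in>A. card {b\<in>B. a \<in> b}) = (\<Sum>b\<in>B. card (b \<inter> A))"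
proof -
  have 1: "card {b\<in>B. a \<in> b} = (\<Sum>b\<in>B. if a \<in> b then 1 else 0)" for a
    using assms(2) by (simp add: sum.inter_filter[symmetric])
  have 2: "card (b \<inter> A) = (\<Sum>a\<in>A. if a \<in> b then 1 else 0)" for b :: "'a set"
  proof -
    have "b \<inter> A = {a\<in>A. a \<in> b}" by auto
    then show ?thesis using assms(1) by (simp add: sum.inter_filter[symmetric])
  qed
  show ?thesis unfolding 1 2 by (rule sum.swap)
qed

locale gctx =
  fixes n d :: nat and V :: "nat set" and E :: "nat set set"
    and S :: "nat \<Rightarrow> nat list" and e :: "nat \<Rightarrow> nat set"
  assumes gr: "is_graph V E"
  and h3a: "\<forall>U\<subseteq>V. real (card U) \<le> sqrt (real n) \<longrightarrow> spans E U \<le> 2 * card U"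
  and h3b: "\<forall>U\<subseteq>V. real (card U) \<le> 10 * ln (ln (real n)) \<longrightarrow> spans E U \<le> card U"
  and h5: "\<forall>X Y. X \<subseteq> V \<and> Y \<subseteq> E \<and> real (card X + card Y) \<le> 20 * real d * ln (real n) \<longrightarrow>
       (\<forall>x\<in>V - X. \<forall>y\<in>V - X.
          (ln (real n)) ^ 3 \<le> real (card (ball (V - X) {f \<in> E - Y. f \<subseteq> V - X} x (lpar n))) \<and>
          (ln (real n)) ^ 3 \<le> real (card (ball (V - X) {f \<in> E - Y. f \<subseteq> V - X} y (lpar n))) \<longrightarrow>
          (\<exists>p. is_path (V - X) {f \<in> E - Y. f \<subseteq> V - X} p \<and> hd p = x \<and> last p = y \<and>
               real (plen p) \<le> 2 * ln (real n)))"
  and hS: "\<forall>i<d. is_path (core_vertices V E 15) (induced E (core_vertices V E 15)) (S i) \<and>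
             plen (S i) \<le> d"
  and hdisj: "\<forall>i<d. \<forall>j<d. i \<noteq> j \<longrightarrow> set (S i) \<inter> set (S j) = {}"
  and hball: "\<forall>i<d. \<forall>j<d. i \<noteq> j \<longrightarrow> (\<forall>x\<in>set (S i). \<forall>y\<in>set (S j).
         ball V E x (lpar n) \<inter> ball V E y (lpar n) = {})"
  and he: "\<forall>i<d. e i \<in> path_edges (S i)"
  and d10: "10 \<le> d" and dlog: "real d \<le> 10 * ln (real n)"
  and a1: "(ln (real n))^3 \<le> 4 powr (3 * ln (ln (real n)) - 1)"
  and a2: "(ln (real n))^3 + 3 * ln (ln (real n)) + 2 \<le> sqrt (real n)"
  and a3: "3 * ln (ln (real n)) + 2 \<le> 8 * ln (real n)"
  and a4: "2 \<le> ln (ln (real n))"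
  and a5: "1 \<le> ln (real n)"
begin

definition "Hc = core_vertices V E 15"
definition "SE = (\<Union>i<d. path_edges (S i))"
definition "Eo = {f \<in> induced E Hc. f \<notin> SE}"

abbreviation "L \<equiv> ln (ln (real n))"
abbreviation "l \<equiv> lpar n"

lemma finV: "finite V" using gr unfolding is_graph_def by auto

lemma E_two: "f \<in> E \<Longrightarrow> \<exists>a b. a \<noteq> b \<and> a \<in> V \<and> b \<in> V \<and> f = {a, b}"
  using gr unfolding is_graph_def by auto

lemma E_subV: "f \<in> E \<Longrightarrow> f \<subseteq> V" using E_two by blast

lemma finE: "finite E"
proof -
  have "E \<subseteq> Pow V" using E_subV by auto
  then show ?thesis by (rule finite_subset) (simp add: finV)
qed

lemma Hc_sub: "Hc \<subseteq> V" unfolding Hc_def core_vertices_def by auto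

lemma Eo_E: "Eo \<subseteq> E" unfolding Eo_def induced_def by auto
lemma Eo_Hc: "f \<in> Eo \<Longrightarrow> f \<subseteq> Hc" unfolding Eo_def induced_def by auto
lemma Eo_SE: "f \<in> Eo \<Longrightarrow> f \<notin> SE" unfolding Eo_def by auto

lemma l_le: "real l \<le> 3 * L"
proof -
  have "0 \<le> 3 * L" using a4 by simp
  then show ?thesis unfolding lpar_def by linarith
qed

lemma l_ge: "3 * L - 1 \<le> real l"
proof -
  have "0 \<le> 3 * L" using a4 by simp
  then show ?thesis unfolding lpar_def by linarith
qed

lemma SE_E: "SE \<subseteq> E"
proof
  fix f assume "f \<in> SE"
  then obtain i where "i < d" "f \<in> path_edges (S i)" unfolding SE_def by auto
  then have "f \<in> induced E (core_vertices V E 15)" using hS path_edges_in_E by blast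
  then show "f \<in> E" unfolding induced_def by auto
qed

lemma S_Hc: "i < d \<Longrightarrow> set (S i) \<subseteq> Hc"
  using hS path_set_V unfolding Hc_def by blast

lemma SE_deg: "card {f \<in> SE. v \<in> f} \<le> 2"
proof (cases "\<exists>i<d. v \<in> set (S i)")
  case True
  then obtain i where i: "i < d" "v \<in> set (S i)" by auto
  have "{f \<in> SE. v \<in> f} \<subseteq> {f \<in> path_edges (S i). v \<in> f}"
  proof
    fix f assume "f \<in> {f \<in> SE. v \<in> f}"
    then obtain j where j: "j < d" "f \<in> path_edges (S j)" "v \<in> f" unfolding SE_def by auto
    then have "v \<in> set (S j)" using path_edges_subset_set by blast
    then have "j = i" using hdisj i j by blast
    then show "f \<in> {f \<in> path_edges (S i). v \<in> f}" using j by auto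
  qed
  then have "card {f \<in> SE. v \<in> f} \<le> card {f \<in> path_edges (S i). v \<in> f}"
    by (intro card_mono) auto
  also have "\<dots> \<le> 2"
    using path_edges_deg[of "S i" v] hS i path_distinct by (auto split: if_splits)
  finally show ?thesis .
next
  case False
  then have emp: "{f \<in> SE. v \<in> f} = {}" unfolding SE_def using path_edges_subset_set by blast
  show ?thesis unfolding emp by simp
qed

lemma deg13: "v \<in> Hc \<Longrightarrow> 13 \<le> card {f \<in> Eo. v \<in> f}"
proof -
  assume v: "v \<in> Hc"
  then obtain W where W: "W \<subseteq> V" "min_deg_ge W (induced E W) 15" "v \<in> W"
    unfolding Hc_def core_vertices_def by auto
  have "W \<subseteq> Hc" using W unfolding Hc_def core_vertices_def by auto
  then have sub: "{f \<in> induced E W. v \<in> f} \<subseteq> {f \<in> induced E Hc. v \<in> f}"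
    unfolding induced_def by auto
  have 15: "15 \<le> card {f \<in> induced E W. v \<in> f}"
    using W unfolding min_deg_ge_def degree_def by auto
  have fin: "finite {f \<in> induced E Hc. v \<in> f}"
    using finE unfolding induced_def by auto
  have "card {f \<in> induced E W. v \<in> f} \<le> card {f \<in> induced E Hc. v \<in> f}"
    using card_mono[OF fin sub] .
  moreover have "{f \<in> induced E Hc. v \<in> f} \<subseteq> {f \<in> Eo. v \<in> f} \<union> {f \<in> SE. v \<in> f}"
    unfolding Eo_def by auto
  then have "card {f \<in> induced E Hc. v \<in> f} \<le> card ({f \<in> Eo. v \<in> f} \<union> {f \<in> SE. v \<in> f})"
    using finE Eo_E SE_E by (intro card_mono) (auto intro: finite_subset)
  also have "\<dots> \<le> card {f \<in> Eo. v \<in> f} + card {f \<in> SE. v \<in> f}" by (rule card_Un_le)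
  finally show ?thesis using 15 SE_deg[of v] by linarith
qed

abbreviation "Cb D r k \<equiv> ball (Hc - D) {f \<in> Eo. f \<subseteq> Hc - D} r k"

lemma Cb_sub: "Cb D r k \<subseteq> Hc - D" by (rule ball_sub)

lemma Cb_fin: "finite (Cb D r k)"
proof -
  have "Cb D r k \<subseteq> V" using Cb_sub Hc_sub by blast
  then show ?thesis using finV by (rule finite_subset)
qed

lemma growth:
  assumes r: "r \<in> Hc" "r \<notin> D"
    and Q: "Qs \<subseteq> D" "Qs \<subseteq> V" "D \<inter> ball Hc Eo r l \<subseteq> Qs" "card Qs \<le> l + 1"
      "card Qs \<le> spans E Qs + 1"
  shows "k \<le> l \<Longrightarrow> 4 ^ k \<le> real (card (Cb D r k)) \<or>
           sqrt (real n) < real (card (Cb D r k) + card Qs)"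
proof (induction k)
  case 0
  have "r \<in> Cb D r 0" using r by (intro ball_self) auto
  then have "0 < card (Cb D r 0)" using Cb_fin[of D r 0] by (auto simp: card_gt_0_iff)
  then show ?case by simp
next
  case (Suc k)
  define C where "C = Cb D r k"
  define C' where "C' = Cb D r (Suc k)"
  have CC': "C \<subseteq> C'" unfolding C_def C'_def by (rule ball_radius_mono) simp
  have C'sub: "C' \<subseteq> Hc - D" unfolding C'_def by (rule ball_sub)
  have finC': "finite C'" unfolding C'_def by (rule Cb_fin)
  have finC: "finite C" using finite_subset[OF CC' finC'] .
  have finQ: "finite Qs" using finite_subset[OF Q(2) finV] .
  have IH: "4 ^ k \<le> real (card C) \<or> sqrt (real n) < real (card C + card Qs)"
    using Suc unfolding C_def by auto
  have disj: "C' \<inter> Qs = {}" using C'sub Q by auto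
  show ?case
  proof (cases "sqrt (real n) < real (card C' + card Qs)")
    case True then show ?thesis unfolding C'_def by simp
  next
    case False
    have "card C \<le> card C'" using CC' finC' card_mono by blast
    then have c4: "4 ^ k \<le> real (card C)" using IH False by linarith
    then have c1: "1 \<le> real (card C)" using one_le_power[of "4::real" k] by linarith
    define U where "U = C' \<union> Qs"
    have cardU: "card U = card C' + card Qs" unfolding U_def using finC' finQ disj
      by (simp add: card_Un_disjoint)
    have UV: "U \<subseteq> V" unfolding U_def using C'sub Hc_sub Q by auto
    have Ule: "real (card U) \<le> sqrt (real n)" using False cardU by simp
    have nb: "f \<subseteq> U" if v: "v \<in> C" and f: "f \<in> Eo" and vf: "v \<in> f" for v f
    proof
      fix w assume wf: "w \<in> f"
      show "w \<in> U"
      proof (cases "w = v")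
        case True then show ?thesis using v CC' unfolding U_def by auto
      next
        case False
        obtain a b where ab: "a \<noteq> b" "f = {a, b}" using E_two f Eo_E by blast
        have fvw: "f = {v, w}" using ab vf wf False by auto
        have wH: "w \<in> Hc" using f wf Eo_Hc by auto
        have "v \<in> ball Hc Eo r k" using v unfolding C_def
          by (rule subsetD[OF ball_mono, rotated 2]) auto
        then have "w \<in> ball Hc Eo r (Suc k)" using ball_ext f fvw wH by metis
        then have "w \<in> ball Hc Eo r l" using ball_radius_mono Suc.prems by blast
        show ?thesis
        proof (cases "w \<in> D")
          case True then show ?thesis using Q \<open>w \<in> ball Hc Eo r l\<close> unfolding U_def by auto
        next
          case False
          have "v \<in> Hc - D" using v ball_sub unfolding C_def by blast
          then have "{v, w} \<in> {f \<in> Eo. f \<subseteq> Hc - D}" using f fvw False wH by auto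
          then have "w \<in> C'" unfolding C'_def using ball_ext[of v] v False wH unfolding C_def by auto
          then show ?thesis unfolding U_def by auto
        qed
      qed
    qed
    define F where "F = {f \<in> Eo. f \<inter> C \<noteq> {}}"
    define Qe where "Qe = {f \<in> E. f \<subseteq> Qs}"
    have finF: "finite F" unfolding F_def by (rule finite_subset[OF _ finE]) (auto dest: subsetD[OF Eo_E])
    have finQe: "finite Qe" unfolding Qe_def using finE by auto
    have FU: "F \<subseteq> {f \<in> E. f \<subseteq> U}" unfolding F_def using nb Eo_E by blast
    have QeU: "Qe \<subseteq> {f \<in> E. f \<subseteq> U}" unfolding Qe_def U_def by auto
    have FQe: "F \<inter> Qe = {}" unfolding F_def Qe_def using disj CC' by auto
    have "card F + card Qe = card (F \<union> Qe)" using finF finQe FQe by (simp add: card_Un_disjoint)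
    also have "\<dots> \<le> spans E U" unfolding spans_def using FU QeU finE by (intro card_mono) auto
    finally have sU1: "card F + spans E Qs \<le> spans E U" unfolding Qe_def spans_def .
    have "(\<Sum>v\<in>C. 13) \<le> (\<Sum>v\<in>C. card {f \<in> Eo. v \<in> f})"
    proof (rule sum_mono)
      fix v assume "v \<in> C"
      then have "v \<in> Hc" using ball_sub unfolding C_def by blast
      then show "13 \<le> card {f \<in> Eo. v \<in> f}" by (rule deg13)
    qed
    also have "\<dots> = (\<Sum>v\<in>C. card {f \<in> F. v \<in> f})"
      by (rule sum.cong) (auto simp: F_def intro!: arg_cong[where f=card])
    also have "\<dots> = (\<Sum>f\<in>F. card (f \<inter> C))" using double_count finC finF by blast
    also have "\<dots> \<le> (\<Sum>f\<in>F. 1 + (if f \<subseteq> C then 1 else 0))"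
    proof (rule sum_mono)
      fix f assume fF: "f \<in> F"
      obtain a b where ab: "a \<noteq> b" "f = {a, b}" using E_two fF Eo_E unfolding F_def by blast
      show "card (f \<inter> C) \<le> 1 + (if f \<subseteq> C then 1 else 0)"
        using ab by (cases "a \<in> C"; cases "b \<in> C") auto
    qed
    also have "\<dots> = card F + card {f \<in> F. f \<subseteq> C}"
    proof -
      have "(\<Sum>f\<in>F. (1::nat) + (if f \<subseteq> C then 1 else 0)) =
            (\<Sum>f\<in>F. 1) + (\<Sum>f\<in>F. if f \<subseteq> C then 1 else 0)" by (rule sum.distrib)
      moreover have "(\<Sum>f\<in>F. if f \<subseteq> C then 1 else 0) = card {f \<in> F. f \<subseteq> C}"
        using finF by (simp add: sum.inter_filter[symmetric])
      ultimately show ?thesis by simp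
    qed
    also have "\<dots> \<le> card F + spans E C"
      unfolding spans_def F_def using finE Eo_E by (intro add_left_mono card_mono) auto
    finally have cnt: "13 * card C \<le> card F + spans E C" by simp
    have cCU: "real (card C) \<le> real (card U)" using \<open>card C \<le> card C'\<close> cardU by simp
    have CV: "C \<subseteq> V" using CC' UV unfolding U_def by auto
    have sC: "spans E C \<le> 2 * card C" by (rule h3a[rule_format, OF CV]) (use cCU Ule in linarith)
    have ql: "real (card Qs) \<le> 3 * L + 1" using Q(4) l_le by linarith
    have key: "4 * real (card C) \<le> real (card C')"
    proof (cases "real (card U) \<le> 10 * L")
      case True
      then have "spans E U \<le> card U" by (rule h3b[rule_format, OF UV])
      then show ?thesis using cnt sC sU1 Q(5) cardU c1 by linarith
    next
      case F2: False
      have "spans E U \<le> 2 * card U" by (rule h3a[rule_format, OF UV Ule])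
      then show ?thesis using cnt sC sU1 Q(5) cardU c1 F2 ql a4 by linarith
    qed
    have "(4::real) ^ Suc k = 4 * 4 ^ k" by simp
    then have "4 ^ Suc k \<le> real (card C')" using c4 key by linarith
    then show ?thesis unfolding C'_def by simp
  qed
qed

end


context gctx begin

lemma bigball:
  assumes r: "r \<in> Hc" "r \<notin> D"
    and Q: "Qs \<subseteq> D" "Qs \<subseteq> V" "D \<inter> ball Hc Eo r l \<subseteq> Qs" "card Qs \<le> l + 1"
      "card Qs \<le> spans E Qs + 1"
  shows "(ln (real n))^3 \<le> real (card (Cb D r l))"
proof -
  have g: "4 ^ l \<le> real (card (Cb D r l)) \<or> sqrt (real n) < real (card (Cb D r l) + card Qs)"
    using growth[OF r Q] by simp
  have "4 powr (3 * L - 1) \<le> 4 powr (real l)" by (rule powr_mono) (use l_ge in auto)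
  also have "4 powr (real l) = (4::real) ^ l" by (simp add: powr_realpow)
  finally have p: "(ln (real n))^3 \<le> 4 ^ l" using a1 by linarith
  have q: "real (card Qs) \<le> 3 * L + 1" using Q(4) l_le by linarith
  show ?thesis
  proof (cases "4 ^ l \<le> real (card (Cb D r l))")
    case True then show ?thesis using p by linarith
  next
    case False
    then have "sqrt (real n) < real (card (Cb D r l)) + real (card Qs)" using g by simp
    then show ?thesis using q a2 by linarith
  qed
qed

lemma Cb_ball:
  "Cb X r k \<subseteq> ball (V - X) {f \<in> E - SE. f \<subseteq> V - X} r k"
proof (rule ball_mono)
  show "Hc - X \<subseteq> V - X" using Hc_sub by auto
  show "{f \<in> Eo. f \<subseteq> Hc - X} \<subseteq> {f \<in> E - SE. f \<subseteq> V - X}"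
    using Eo_E Eo_SE Hc_sub by auto
qed

lemma bigball2:
  assumes r: "r \<in> Hc" "r \<notin> X"
    and Q: "Qs \<subseteq> X" "Qs \<subseteq> V" "X \<inter> ball Hc Eo r l \<subseteq> Qs" "card Qs \<le> l + 1"
      "card Qs \<le> spans E Qs + 1"
  shows "(ln (real n))^3 \<le> real (card (ball (V - X) {f \<in> E - SE. f \<subseteq> V - X} r l))"
proof -
  have fin: "finite (ball (V - X) {f \<in> E - SE. f \<subseteq> V - X} r l)"
    by (rule finite_subset[OF subset_trans[OF ball_sub Diff_subset] finV])
  have "card (Cb X r l) \<le> card (ball (V - X) {f \<in> E - SE. f \<subseteq> V - X} r l)"
    using Cb_ball fin by (rule card_mono[rotated])
  then show ?thesis using bigball[OF r Q] by linarith
qed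

lemma e_xy: "i < d \<Longrightarrow> \<exists>a b. e i = {a, b} \<and> a \<noteq> b \<and> a \<in> set (S i) \<and> b \<in> set (S i)"
proof -
  assume i: "i < d"
  then obtain k where k: "e i = {S i ! k, S i ! Suc k}" "Suc k < length (S i)"
    using he unfolding path_edges_def by blast
  have dist: "distinct (S i)" using hS i path_distinct by blast
  have "S i ! k \<noteq> S i ! Suc k" using dist k(2) by (simp add: nth_eq_iff_index_eq)
  then show ?thesis using k by (intro exI conjI) (auto simp: nth_mem)
qed

definition "xr i = (SOME a. \<exists>b. e i = {a, b} \<and> a \<noteq> b \<and> a \<in> set (S i) \<and> b \<in> set (S i))"
definition "yr i = (SOME b. e i = {xr i, b} \<and> xr i \<noteq> b \<and> xr i \<in> set (S i) \<and> b \<in> set (S i))"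

lemma xy: "i < d \<Longrightarrow> e i = {xr i, yr i} \<and> xr i \<noteq> yr i \<and> xr i \<in> set (S i) \<and> yr i \<in> set (S i)"
proof -
  assume i: "i < d"
  have "\<exists>b. e i = {xr i, b} \<and> xr i \<noteq> b \<and> xr i \<in> set (S i) \<and> b \<in> set (S i)"
    unfolding xr_def by (rule someI_ex) (rule e_xy[OF i])
  then show ?thesis unfolding yr_def by (rule someI_ex)
qed

lemma xr_Hc: "i < d \<Longrightarrow> xr i \<in> Hc" using xy S_Hc by blast
lemma yr_Hc: "i < d \<Longrightarrow> yr i \<in> Hc" using xy S_Hc by blast
lemma xr_V: "i < d \<Longrightarrow> xr i \<in> V" using xr_Hc Hc_sub by blast
lemma yr_V: "i < d \<Longrightarrow> yr i \<in> V" using yr_Hc Hc_sub by blast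
lemma e_E: "i < d \<Longrightarrow> e i \<in> E"
proof -
  assume i: "i < d"
  have "e i \<in> induced E (core_vertices V E 15)" using he hS i path_edges_in_E by blast
  then show ?thesis unfolding induced_def by auto
qed

definition "T i = ball Hc Eo (xr i) l \<union> ball Hc Eo (yr i) l"

lemma T_G: "T i \<subseteq> ball V E (xr i) l \<union> ball V E (yr i) l"
  unfolding T_def using ball_mono[OF Hc_sub Eo_E] by blast

lemma T_Hc: "T i \<subseteq> Hc" unfolding T_def using ball_sub by blast

lemma T_disj: "i < d \<Longrightarrow> j < d \<Longrightarrow> i \<noteq> j \<Longrightarrow> T i \<inter> T j = {}"
proof -
  assume ij: "i < d" "j < d" "i \<noteq> j"
  have H: "ball V E a l \<inter> ball V E b l = {}" if "a \<in> set (S i)" "b \<in> set (S j)" for a b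
    using hball ij that by blast
  have "(ball V E (xr i) l \<union> ball V E (yr i) l) \<inter> (ball V E (xr j) l \<union> ball V E (yr j) l) = {}"
    using H xy ij by blast
  then show ?thesis using T_G[of i] T_G[of j] by blast
qed

lemma xr_T: "i < d \<Longrightarrow> xr i \<in> T i" unfolding T_def using ball_self xr_Hc by blast
lemma yr_T: "i < d \<Longrightarrow> yr i \<in> T i" unfolding T_def using ball_self yr_Hc by blast
lemma ballT: "z = xr i \<or> z = yr i \<Longrightarrow> ball Hc Eo z l \<subseteq> T i" unfolding T_def by blast

definition inv :: "nat \<Rightarrow> nat list \<Rightarrow> nat set \<Rightarrow> nat \<Rightarrow> nat set \<Rightarrow> bool" where
 "inv m P I j0 Qs \<longleftrightarrow> I \<subseteq> {..<d} \<and> card I = m \<and> j0 \<in> I \<and> is_path V E P \<and>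
   path_edges P \<inter> SE \<subseteq> e ` I \<and> e ` I \<subseteq> path_edges P \<and>
   (\<forall>j<d. j \<notin> I \<longrightarrow> set P \<inter> T j = {}) \<and> (last P = xr j0 \<or> last P = yr j0) \<and>
   Qs \<subseteq> set P \<and> last P \<notin> Qs \<and> (set P - {last P}) \<inter> T j0 \<subseteq> Qs \<and>
   card Qs \<le> l + 1 \<and> card Qs \<le> spans E Qs + 1 \<and>
   real (length P) \<le> real m * (2 * ln (real n) + real l + 2)"

lemma inv_init: "inv 1 [xr 0, yr 0] {0} 0 {xr 0}"
proof -
  have d0: "0 < d" using d10 by simp
  have X: "e 0 = {xr 0, yr 0}" "xr 0 \<noteq> yr 0" using xy[OF d0] by auto
  have p: "is_path V E [xr 0, yr 0]"
    using X xr_V[OF d0] yr_V[OF d0] e_E[OF d0] by (simp add: is_path_Cons2)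
  have pe: "path_edges [xr 0, yr 0] = {e 0}" using X by (simp add: path_edges_Cons2)
  have unv: "\<forall>j<d. j \<notin> {0} \<longrightarrow> set [xr 0, yr 0] \<inter> T j = {}"
    using T_disj xr_T yr_T d0 by fastforce
  have len: "real (length [xr 0, yr 0]) \<le> real 1 * (2 * ln (real n) + real l + 2)"
    using a5 by simp
  show ?thesis unfolding inv_def using p pe unv len X d0 T_disj by auto
qed

lemma inv_final:
  assumes "inv d P I j0 Qs"
  shows "is_path V E P \<and> e ` {..<d} \<subseteq> path_edges P \<and>
            path_edges P \<inter> (\<Union>i<d. path_edges (S i)) \<subseteq> e ` {..<d}"
proof -
  have I: "I \<subseteq> {..<d}" "card I = d" using assms unfolding inv_def by auto
  have "I = {..<d}" using I by (intro card_subset_eq) auto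
  then show ?thesis using assms unfolding inv_def SE_def by auto
qed

end


context gctx begin

lemma card_SE: "card SE \<le> d * d"
proof -
  have "card SE \<le> (\<Sum>i<d. card (path_edges (S i)))" unfolding SE_def by (rule card_UN_le) simp
  also have "\<dots> \<le> (\<Sum>i<d. d)"
  proof (rule sum_mono)
    fix i assume "i \<in> {..<d}"
    then have "is_path (core_vertices V E 15) (induced E (core_vertices V E 15)) (S i)" "plen (S i) \<le> d"
      using hS by auto
    then show "card (path_edges (S i)) \<le> d" using path_edges_card unfolding plen_def by metis
  qed
  finally show ?thesis by simp
qed

lemma budget:
  assumes "m \<le> d" "card X \<le> length P"
    "real (length P) \<le> real m * (2 * ln (real n) + real l + 2)"
  shows "real (card X + card SE) \<le> 20 * real d * ln (real n)"
proof -
  have br: "0 \<le> 2 * ln (real n) + real l + 2" using a5 by simp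
  have "real m * (2 * ln (real n) + real l + 2) \<le> real d * (2 * ln (real n) + real l + 2)"
    using assms(1) br by (intro mult_right_mono) auto
  also have "\<dots> \<le> real d * (2 * ln (real n) + 3 * L + 2)"
    using l_le by (intro mult_left_mono) auto
  finally have c1: "real (card X) \<le> real d * (2 * ln (real n) + 3 * L + 2)"
    using assms(2,3) by linarith
  have "real (card SE) \<le> real d * real d" using card_SE by (metis of_nat_le_iff of_nat_mult)
  also have "\<dots> \<le> real d * (10 * ln (real n))" using dlog by (intro mult_left_mono) auto
  finally have c2: "real (card SE) \<le> real d * (10 * ln (real n))" .
  have "real d * (2 * ln (real n) + 3 * L + 2) + real d * (10 * ln (real n))
        = real d * (12 * ln (real n) + 3 * L + 2)" by (simp add: algebra_simps)
  also have "\<dots> \<le> real d * (20 * ln (real n))" using a3 by (intro mult_left_mono) auto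
  finally show ?thesis using c1 c2 by simp
qed

lemma step:
  assumes inv: "inv m P I j0 Qs" and md: "m < d"
  shows "\<exists>P' I' j0' Qs'. inv (Suc m) P' I' j0' Qs'"
proof -
  have I: "I \<subseteq> {..<d}" "card I = m" "j0 \<in> I" and Pp: "is_path V E P"
   and PSE: "path_edges P \<inter> SE \<subseteq> e ` I" and eP: "e ` I \<subseteq> path_edges P"
   and unv: "\<forall>j<d. j \<notin> I \<longrightarrow> set P \<inter> T j = {}" and lastP: "last P = xr j0 \<or> last P = yr j0"
   and Qs: "Qs \<subseteq> set P" "last P \<notin> Qs" "(set P - {last P}) \<inter> T j0 \<subseteq> Qs" "card Qs \<le> l + 1"
     "card Qs \<le> spans E Qs + 1"
   and lenP: "real (length P) \<le> real m * (2 * ln (real n) + real l + 2)"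
    using inv unfolding inv_def by blast+
  define z where "z = last P"
  have j0d: "j0 < d" using I by auto
  have Pne: "P \<noteq> []" using Pp path_ne by blast
  have zP: "z \<in> set P" unfolding z_def using Pne by simp
  have PV: "set P \<subseteq> V" using Pp path_set_V by blast
  have finI: "finite I" using I(1) finite_subset by blast
  obtain j where j: "j < d" "j \<notin> I"
  proof -
    have "\<not> {..<d} \<subseteq> I"
    proof
      assume "{..<d} \<subseteq> I"
      then have "card {..<d} \<le> card I" using finI by (rule card_mono[rotated])
      then show False using I(2) md by simp
    qed
    then show ?thesis using that by blast
  qed
  define X where "X = set P - {z}"
  have XV: "X \<subseteq> V" unfolding X_def using PV by blast
  have zX: "z \<in> V - X" unfolding X_def using zP PV by blast
  have zH: "z \<in> Hc" unfolding z_def using lastP xr_Hc yr_Hc j0d by metis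
  have zT: "ball Hc Eo z l \<subseteq> T j0" unfolding z_def using lastP by (rule ballT)
  have xjT: "xr j \<in> T j" using xr_T j by blast
  have xjP: "xr j \<notin> set P" using unv j xjT by blast
  have xjX: "xr j \<in> V - X" using xjP xr_V[OF j(1)] unfolding X_def by blast
  have b1: "(ln (real n))^3 \<le> real (card (ball (V - X) {f \<in> E - SE. f \<subseteq> V - X} z l))"
  proof (rule bigball2[OF zH _ _ _ _ Qs(4,5)])
    show "z \<notin> X" unfolding X_def by blast
    show "Qs \<subseteq> X" unfolding X_def using Qs(1,2) z_def by blast
    show "Qs \<subseteq> V" using Qs(1) PV by blast
    show "X \<inter> ball Hc Eo z l \<subseteq> Qs" unfolding X_def using zT Qs(3) z_def by blast
  qed
  have b2: "(ln (real n))^3 \<le> real (card (ball (V - X) {f \<in> E - SE. f \<subseteq> V - X} (xr j) l))"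
  proof (rule bigball2[OF xr_Hc[OF j(1)]])
    show "xr j \<notin> X" using xjX by blast
    show "X \<inter> ball Hc Eo (xr j) l \<subseteq> {}"
      using ballT[of "xr j" j] unv j unfolding X_def by blast
  qed auto
  have cX: "card X \<le> length P"
  proof -
    have "card X \<le> card (set P)" unfolding X_def by (rule card_mono) auto
    also have "\<dots> \<le> length P" by (rule card_length)
    finally show ?thesis .
  qed
  have bud: "real (card X + card SE) \<le> 20 * real d * ln (real n)"
    using budget[of m X P] md cX lenP by simp
  have H5: "\<forall>x\<in>V - X. \<forall>y\<in>V - X.
          (ln (real n)) ^ 3 \<le> real (card (ball (V - X) {f \<in> E - SE. f \<subseteq> V - X} x (lpar n))) \<and>
          (ln (real n)) ^ 3 \<le> real (card (ball (V - X) {f \<in> E - SE. f \<subseteq> V - X} y (lpar n))) \<longrightarrow>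
          (\<exists>p. is_path (V - X) {f \<in> E - SE. f \<subseteq> V - X} p \<and> hd p = x \<and> last p = y \<and>
               real (plen p) \<le> 2 * ln (real n))"
    using h5[THEN spec[of _ X], THEN spec[of _ SE]] XV SE_E bud by blast
  obtain p where p: "is_path (V - X) {f \<in> E - SE. f \<subseteq> V - X} p" "hd p = z" "last p = xr j"
      "real (plen p) \<le> 2 * ln (real n)"
    using H5 zX xjX b1 b2 by blast
  define UU where "UU = (\<Union>j'\<in>{j'. j' < d \<and> j' \<notin> I}. T j')"
  have UUI: "x \<in> UU" if "j' < d" "j' \<notin> I" "x \<in> T j'" for x j'
    unfolding UU_def using that by (intro UN_I[of j']) auto
  have pne: "p \<noteq> []" using p(1) path_ne by blast
  have "p ! (length p - 1) \<in> UU"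
  proof -
    have "p ! (length p - 1) = xr j" using p(3) pne by (simp add: last_conv_nth)
    then show ?thesis using UUI[OF j xjT] by simp
  qed
  then obtain t where t: "t \<le> length p - 1" "\<forall>s<t. p ! s \<notin> UU" "p ! t \<in> UU"
    using ex_least_nat_le[of "\<lambda>s. p ! s \<in> UU"] by blast
  define w where "w = p ! t"
  obtain j1 where j1: "j1 < d" "j1 \<notin> I" "w \<in> T j1" using t(3) unfolding UU_def w_def by blast
  have tl: "t < length p" using t(1) pne by (cases p) auto
  define R where "R = take (Suc t) p"
  have Rp: "is_path (V - X) {f \<in> E - SE. f \<subseteq> V - X} R" unfolding R_def using p(1) by (rule path_take) simp
  have RpG: "is_path V E R" using Rp by (rule path_mono) auto
  have hdR: "hd R = z" unfolding R_def using p(2) by simp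
  have lastR: "last R = w"
  proof -
    have "R = take t p @ [p ! t]" unfolding R_def using tl by (rule take_Suc_conv_app_nth)
    then show ?thesis unfolding w_def by simp
  qed
  have setR: "x = w \<or> x \<notin> UU" if xR: "x \<in> set R" for x
  proof -
    obtain s where s: "s < length R" "R ! s = x" using xR by (auto simp: in_set_conv_nth)
    have "s \<le> t" using s(1) unfolding R_def by simp
    moreover have "x = p ! s" using s unfolding R_def by simp
    ultimately show ?thesis using t(2) unfolding w_def by (cases "s = t") auto
  qed
  have RX: "set R \<subseteq> V - X" using Rp path_set_V by blast
  have PR: "set P \<inter> set R \<subseteq> {hd R}" using RX hdR unfolding X_def by blast
  have ER: "path_edges R \<inter> SE = {}" using path_edges_in_E[OF Rp] by blast
  have lenR: "length R = Suc t" unfolding R_def using tl by simp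
  have tle: "real t \<le> 2 * ln (real n)" using p(4) t(1) unfolding plen_def by linarith
  define PQ where "PQ = (\<lambda>q. is_path Hc Eo q \<and> (hd q = xr j1 \<or> hd q = yr j1) \<and> last q = w)"
  have exQ: "\<exists>q. PQ q \<and> plen q \<le> l"
    using j1(3) unfolding T_def ball_def PQ_def by blast
  then obtain q0 where q0: "PQ q0" by blast
  obtain Q0 where Q0: "PQ Q0" "\<forall>q. PQ q \<longrightarrow> plen Q0 \<le> plen q"
    using ex_has_least_nat[of PQ q0 plen] q0 by blast
  have plQ0: "plen Q0 \<le> l" using exQ Q0(2) by (meson order_trans)
  have Q0p: "is_path Hc Eo Q0" and hdQ0: "hd Q0 = xr j1 \<or> hd Q0 = yr j1" and lastQ0: "last Q0 = w"
    using Q0(1) unfolding PQ_def by auto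
  have Q0ne: "Q0 \<noteq> []" using Q0p path_ne by blast
  define r where "r = hd Q0"
  define r' where "r' = (if r = xr j1 then yr j1 else xr j1)"
  have XY: "e j1 = {xr j1, yr j1}" "xr j1 \<noteq> yr j1" using xy[OF j1(1)] by auto
  have rr: "{r, r'} = e j1" "r \<noteq> r'" "r' = xr j1 \<or> r' = yr j1" "r = xr j1 \<or> r = yr j1"
    using hdQ0 XY unfolding r_def r'_def by auto
  have r'Q: "r' \<notin> set Q0"
  proof
    assume "r' \<in> set Q0"
    then obtain a where a: "a < length Q0" "Q0 ! a = r'" by (auto simp: in_set_conv_nth)
    have "a \<noteq> 0"
    proof
      assume "a = 0"
      then have "r' = r" using a Q0ne unfolding r_def by (simp add: hd_conv_nth)
      then show False using rr(2) by simp
    qed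
    have "PQ (drop a Q0)" unfolding PQ_def
      using path_drop[OF Q0p a(1)] a rr(3) lastQ0 by (simp add: hd_drop_conv_nth)
    then have "plen Q0 \<le> plen (drop a Q0)" using Q0(2) by blast
    then show False using \<open>a \<noteq> 0\<close> a(1) unfolding plen_def by simp
  qed
  have Q0T: "set Q0 \<subseteq> T j1"
  proof
    fix x assume "x \<in> set Q0"
    then obtain a where a: "a < length Q0" "Q0 ! a = x" by (auto simp: in_set_conv_nth)
    have "is_path Hc Eo (take (Suc a) Q0)" using Q0p by (rule path_take) simp
    moreover have "hd (take (Suc a) Q0) = r" unfolding r_def by simp
    moreover have "last (take (Suc a) Q0) = x"
    proof -
      have "take (Suc a) Q0 = take a Q0 @ [Q0 ! a]" using a(1) by (rule take_Suc_conv_app_nth)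
      then show ?thesis using a(2) by simp
    qed
    moreover have "plen (take (Suc a) Q0) \<le> l" using a plQ0 unfolding plen_def by auto
    ultimately have "x \<in> ball Hc Eo r l" unfolding ball_def by blast
    then show "x \<in> T j1" using ballT[OF rr(4)] by blast
  qed
  have r'T: "r' \<in> T j1" using rr(3) xr_T yr_T j1(1) by metis
  have wQ: "w \<in> set Q0" using lastQ0 Q0ne last_in_set by blast
  have rQ: "r \<in> set Q0" unfolding r_def using Q0ne by simp
  have J1: "is_path V E (P @ tl R) \<and> path_edges (P @ tl R) = path_edges P \<union> path_edges R"
  proof -
    have lh: "last P = hd R" using hdR z_def by simp
    show ?thesis using path_join[OF Pp RpG lh PR] .
  qed
  define P1 where "P1 = P @ tl R"
  have Rne: "R \<noteq> []" using RpG path_ne by blast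
  have P1p: "is_path V E P1" and eP1: "path_edges P1 = path_edges P \<union> path_edges R"
    using J1 unfolding P1_def by auto
  have lastP1: "last P1 = w" unfolding P1_def using last_join[OF Rne _ Pne] hdR lastR z_def by simp
  have setP1: "set P1 = set P \<union> set R" unfolding P1_def using set_join[OF Rne _ Pne] hdR z_def by simp
  have P1ne: "P1 \<noteq> []" using P1p path_ne by blast
  define Qr where "Qr = rev Q0"
  have Qrp: "is_path V E Qr" unfolding Qr_def using path_rev[OF Q0p] Hc_sub Eo_E by (rule path_mono)
  have hdQr: "hd Qr = w" unfolding Qr_def using lastQ0 Q0ne by (simp add: hd_rev)
  have lastQr: "last Qr = r" unfolding Qr_def r_def using Q0ne by (simp add: last_rev)
  have Qrne: "Qr \<noteq> []" using Q0ne unfolding Qr_def by simp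
  have setQr: "set Qr = set Q0" unfolding Qr_def by simp
  have int2: "set P1 \<inter> set Qr \<subseteq> {hd Qr}"
  proof
    fix x assume x: "x \<in> set P1 \<inter> set Qr"
    then have xT: "x \<in> T j1" using setQr Q0T by blast
    have "x \<notin> set P" using xT unv j1 by blast
    then have "x \<in> set R" using x setP1 by blast
    moreover have "x \<in> UU" using UUI[OF j1(1,2) xT] .
    ultimately have "x = w" using setR by blast
    then show "x \<in> {hd Qr}" using hdQr by simp
  qed
  have J2: "is_path V E (P1 @ tl Qr) \<and> path_edges (P1 @ tl Qr) = path_edges P1 \<union> path_edges Qr"
    using path_join[OF P1p Qrp] lastP1 hdQr int2 by simp
  define P2 where "P2 = P1 @ tl Qr"
  have P2p: "is_path V E P2" and eP2: "path_edges P2 = path_edges P1 \<union> path_edges Qr"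
    using J2 unfolding P2_def by auto
  have lastP2: "last P2 = r" unfolding P2_def using last_join[OF Qrne _ P1ne] lastP1 hdQr lastQr by simp
  have setP2: "set P2 = set P1 \<union> set Q0" unfolding P2_def using set_join[OF Qrne _ P1ne] lastP1 hdQr setQr by simp
  have P2ne: "P2 \<noteq> []" using P2p path_ne by blast
  have rV: "r \<in> V" "r' \<in> V" using rr(3,4) xr_V yr_V j1(1) by metis+
  have RRp: "is_path V E [r, r']" using rV rr e_E[OF j1(1)] by (simp add: is_path_Cons2)
  have r'P: "r' \<notin> set P" using r'T unv j1 by blast
  have r'R: "r' \<notin> set R"
  proof
    assume "r' \<in> set R"
    moreover have "r' \<in> UU" using UUI[OF j1(1,2) r'T] .
    ultimately have "r' = w" using setR by blast
    then show False using wQ r'Q by simp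
  qed
  have int3: "set P2 \<inter> set [r, r'] \<subseteq> {hd [r, r']}"
    using r'P r'R r'Q setP2 setP1 by auto
  have J3: "is_path V E (P2 @ tl [r, r']) \<and> path_edges (P2 @ tl [r, r']) = path_edges P2 \<union> path_edges [r, r']"
    using path_join[OF P2p RRp] lastP2 int3 by simp
  define P3 where "P3 = P2 @ [r']"
  have P3p: "is_path V E P3" and eP3: "path_edges P3 = path_edges P2 \<union> {e j1}"
    using J3 rr(1) unfolding P3_def by (auto simp: path_edges_Cons2)
  have lastP3: "last P3 = r'" unfolding P3_def by simp
  have setP3: "set P3 = set P \<union> set R \<union> set Q0 \<union> {r'}" unfolding P3_def using setP2 setP1 by auto
  have eAll: "path_edges P3 = path_edges P \<union> path_edges R \<union> path_edges Qr \<union> {e j1}"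
    using eP3 eP2 eP1 by auto
  have eQr: "path_edges Qr \<inter> SE = {}"
  proof -
    have "path_edges Qr \<subseteq> Eo" unfolding Qr_def using path_edges_rev path_edges_in_E[OF Q0p] by blast
    then show ?thesis using Eo_SE by blast
  qed
  have lenP3: "length P3 = length P + t + length Q0"
  proof -
    have "length P1 = length P + t" unfolding P1_def using lenR by simp
    moreover have "length P2 = length P1 + (length Q0 - 1)" unfolding P2_def Qr_def by simp
    ultimately show ?thesis unfolding P3_def using Q0ne by (cases Q0) auto
  qed
  have lQ0: "length Q0 \<le> l + 1" using plQ0 Q0ne unfolding plen_def by simp
  have cQ0: "card (set Q0) = length Q0" using path_distinct[OF Q0p] by (simp add: distinct_card)
  have sQ0: "card (set Q0) \<le> spans E (set Q0) + 1"
  proof -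
    have "path_edges Q0 \<subseteq> {f \<in> E. f \<subseteq> set Q0}"
      using path_edges_in_E[OF Q0p] Eo_E path_edges_subset_set by blast
    then have "card (path_edges Q0) \<le> spans E (set Q0)" unfolding spans_def
      using finE by (intro card_mono) auto
    then show ?thesis using path_edges_card[OF Q0p] cQ0 by simp
  qed
  have new: "inv (Suc m) P3 (insert j1 I) j1 (set Q0)"
    unfolding inv_def
  proof (intro conjI)
    show "insert j1 I \<subseteq> {..<d}" using I(1) j1(1) by simp
    show "card (insert j1 I) = Suc m" using finI j1(2) I(2) by simp
    show "j1 \<in> insert j1 I" by simp
    show "is_path V E P3" by (rule P3p)
    show "path_edges P3 \<inter> SE \<subseteq> e ` insert j1 I" using eAll PSE ER eQr by auto
    show "e ` insert j1 I \<subseteq> path_edges P3" using eAll eP by auto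
    show "\<forall>j<d. j \<notin> insert j1 I \<longrightarrow> set P3 \<inter> T j = {}"
    proof (intro allI impI)
      fix j' assume j': "j' < d" "j' \<notin> insert j1 I"
      have dj: "T j1 \<inter> T j' = {}" using T_disj j1(1) j' by auto
      have a: "set P \<inter> T j' = {}" using unv j' by auto
      have b: "set R \<inter> T j' = {}"
      proof -
        have "x \<notin> T j'" if "x \<in> set R" for x
        proof
          assume xT: "x \<in> T j'"
          then have "x \<in> UU" using UUI j' by blast
          then have "x = w" using setR that by blast
          then show False using xT dj j1(3) by blast
        qed
        then show ?thesis by blast
      qed
      show "set P3 \<inter> T j' = {}" using setP3 a b Q0T r'T dj by blast
    qed
    show "last P3 = xr j1 \<or> last P3 = yr j1" using lastP3 rr(3) by simp
    show "set Q0 \<subseteq> set P3" using setP3 by blast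
    show "last P3 \<notin> set Q0" using lastP3 r'Q by simp
    show "(set P3 - {last P3}) \<inter> T j1 \<subseteq> set Q0"
    proof
      fix x assume x: "x \<in> (set P3 - {last P3}) \<inter> T j1"
      have "x \<notin> set P" using x unv j1 by blast
      moreover have "x \<in> set R \<Longrightarrow> x \<in> set Q0"
      proof -
        assume "x \<in> set R"
        moreover have "x \<in> UU" using UUI[OF j1(1,2)] x by blast
        ultimately have "x = w" using setR by blast
        then show ?thesis using wQ by simp
      qed
      ultimately show "x \<in> set Q0" using x setP3 lastP3 by blast
    qed
    show "card (set Q0) \<le> l + 1" using cQ0 lQ0 by simp
    show "card (set Q0) \<le> spans E (set Q0) + 1" by (rule sQ0)
    show "real (length P3) \<le> real (Suc m) * (2 * ln (real n) + real l + 2)"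
    proof -
      have "real (length P3) = real (length P) + real t + real (length Q0)" using lenP3 by simp
      also have "\<dots> \<le> real m * (2 * ln (real n) + real l + 2) + 2 * ln (real n) + (real l + 1)"
        using lenP tle lQ0 by linarith
      also have "\<dots> \<le> real (Suc m) * (2 * ln (real n) + real l + 2)" by (simp add: algebra_simps)
      finally show ?thesis .
    qed
  qed
  then show ?thesis by blast
qed

end


lemma ev_ln_ge: "eventually (\<lambda>n::nat. K \<le> ln (real n)) sequentially"
proof -
  have "filterlim (\<lambda>n::nat. ln (real n)) at_top sequentially" by real_asymp
  then show ?thesis by (simp add: filterlim_at_top)
qed

lemma ln4: "1 < ln (4::real)"
proof -
  have "exp 1 < (4::real)" using exp_le by linarith
  then have "ln (exp 1) < ln (4::real)" by (subst ln_less_cancel_iff) auto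
  then show ?thesis by simp
qed

lemma a1_aux:
  fixes y :: real
  assumes y1: "1 \<le> y" and yc: "4 powr (1 / (3 * ln 4 - 3)) \<le> y"
  shows "y ^ 3 \<le> 4 powr (3 * ln y - 1)"
proof -
  define c where "c = 3 * ln (4::real) - 3"
  have c0: "0 < c" unfolding c_def using ln4 by simp
  have ypos: "0 < y" using y1 by simp
  have "4 powr (3 * ln y - 1) = 4 powr (3 * ln y) / 4" by (simp add: powr_diff)
  also have "4 powr (3 * ln y) = y powr (3 * ln 4)"
    using ypos by (simp add: powr_def)
  also have "y powr (3 * ln 4) = y powr (3 + c)" unfolding c_def by simp
  also have "\<dots> = y powr 3 * y powr c" by (rule powr_add)
  also have "y powr 3 = y ^ 3" using ypos powr_realpow[of y 3] by simp
  finally have eq: "4 powr (3 * ln y - 1) = y ^ 3 * y powr c / 4" .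
  have "(4::real) = (4 powr (1 / c)) powr c" using c0 by (simp add: powr_powr)
  also have "\<dots> \<le> y powr c" using yc c0 unfolding c_def by (intro powr_mono2) auto
  finally have "4 \<le> y powr c" .
  moreover have "0 \<le> y ^ 3" using ypos by simp
  ultimately have "y ^ 3 * 4 \<le> y ^ 3 * y powr c" by (intro mult_left_mono)
  then show ?thesis unfolding eq by simp
qed

lemma asym_all: "\<exists>N. \<forall>n\<ge>N.
   (ln (real n))^3 \<le> 4 powr (3 * ln (ln (real n)) - 1) \<and>
   (ln (real n))^3 + 3 * ln (ln (real n)) + 2 \<le> sqrt (real n) \<and>
   3 * ln (ln (real n)) + 2 \<le> 8 * ln (real n) \<and>
   2 \<le> ln (ln (real n)) \<and> 1 \<le> ln (real n)"
proof -
  have e1: "eventually (\<lambda>n::nat. (ln (real n))^3 + 3 * ln (ln (real n)) + 2 \<le> sqrt (real n)) sequentially"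
    by real_asymp
  have e2: "eventually (\<lambda>n::nat. 3 * ln (ln (real n)) + 2 \<le> 8 * ln (real n)) sequentially"
    by real_asymp
  have e3: "eventually (\<lambda>n::nat. 2 \<le> ln (ln (real n))) sequentially"
    by real_asymp
  have e4: "eventually (\<lambda>n::nat. 1 \<le> ln (real n)) sequentially" by (rule ev_ln_ge)
  have e5: "eventually (\<lambda>n::nat. 4 powr (1 / (3 * ln 4 - 3)) \<le> ln (real n)) sequentially"
    by (rule ev_ln_ge)
  have "eventually (\<lambda>n::nat. (ln (real n))^3 \<le> 4 powr (3 * ln (ln (real n)) - 1) \<and>
   (ln (real n))^3 + 3 * ln (ln (real n)) + 2 \<le> sqrt (real n) \<and>
   3 * ln (ln (real n)) + 2 \<le> 8 * ln (real n) \<and>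
   2 \<le> ln (ln (real n)) \<and> 1 \<le> ln (real n)) sequentially"
    using e1 e2 e3 e4 e5 by eventually_elim (use a1_aux in auto)
  then show ?thesis by (simp add: eventually_sequentially)
qed


context gctx begin

lemma reach: "1 \<le> m \<Longrightarrow> m \<le> d \<Longrightarrow> \<exists>P I j0 Qs. inv m P I j0 Qs"
proof (induction m)
  case 0 then show ?case by simp
next
  case (Suc m)
  show ?case
  proof (cases "m = 0")
    case True then show ?thesis using inv_init by auto
  next
    case False
    then obtain P I j0 Qs where "inv m P I j0 Qs" using Suc by auto
    moreover have "m < d" using Suc.prems by simp
    ultimately show ?thesis by (rule step)
  qed
qed

lemma concl: "\<exists>P. is_path V E P \<and> e ` {..<d} \<subseteq> path_edges P \<and>
            path_edges P \<inter> (\<Union>i<d. path_edges (S i)) \<subseteq> e ` {..<d}"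
proof -
  obtain P I j0 Qs where "inv d P I j0 Qs" using reach[of d] d10 by auto
  then show ?thesis using inv_final by blast
qed

end

theorem lemma4p3:
  shows "\<exists>N::nat. \<forall>n\<ge>N. \<forall>(d::nat) (V::nat set) (E::nat set set)
           (S::nat \<Rightarrow> nat list) (e::nat \<Rightarrow> nat set).
    10 \<le> d \<and> real d \<le> 10 * ln (real n) \<and>
    is_graph V E \<and> card V = n \<and>
    card E \<le> d * n \<and>
    (\<forall>x\<in>V. \<forall>i\<le>n. real (card (sphere V E x i)) \<le> (2 * real d) ^ i * ln (real n)) \<and>
    (\<forall>U\<subseteq>V. real (card U) \<le> sqrt (real n) \<longrightarrow> spans E U \<le> 2 * card U) \<and>
    (\<forall>U\<subseteq>V. real (card U) \<le> 10 * ln (ln (real n)) \<longrightarrow> spans E U \<le> card U) \<and>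
    (\<forall>V' E'. subgraph V' E' V E \<and> min_deg_ge V' E' 10 \<longrightarrow>
       (\<forall>x\<in>V'. \<forall>i::nat. 1 \<le> i \<and> real i \<le> 10 * ln (ln (real n)) \<longrightarrow>
          2 ^ i \<le> card (sphere V' E' x i))) \<and>
    (\<forall>X Y. X \<subseteq> V \<and> Y \<subseteq> E \<and> real (card X + card Y) \<le> 20 * real d * ln (real n) \<longrightarrow>
       (\<forall>x\<in>V - X. \<forall>y\<in>V - X.
          (ln (real n)) ^ 3 \<le> real (card (ball (V - X) {f \<in> E - Y. f \<subseteq> V - X} x (lpar n))) \<and>
          (ln (real n)) ^ 3 \<le> real (card (ball (V - X) {f \<in> E - Y. f \<subseteq> V - X} y (lpar n))) \<longrightarrow>
          (\<exists>p. is_path (V - X) {f \<in> E - Y. f \<subseteq> V - X} p \<and> hd p = x \<and> last p = y \<and>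
               real (plen p) \<le> 2 * ln (real n)))) \<and>
    (\<forall>i<d. is_path (core_vertices V E 15) (induced E (core_vertices V E 15)) (S i) \<and>
             plen (S i) \<le> d) \<and>
    (\<forall>i<d. \<forall>j<d. i \<noteq> j \<longrightarrow> set (S i) \<inter> set (S j) = {}) \<and>
    (\<forall>i<d. \<forall>j<d. i \<noteq> j \<longrightarrow> (\<forall>x\<in>set (S i). \<forall>y\<in>set (S j).
         ball V E x (lpar n) \<inter> ball V E y (lpar n) = {})) \<and>
    (\<forall>i<d. e i \<in> path_edges (S i))
    \<longrightarrow> (\<exists>P. is_path V E P \<and> e ` {..<d} \<subseteq> path_edges P \<and>
            path_edges P \<inter> (\<Union>i<d. path_edges (S i)) \<subseteq> e ` {..<d})"
proof -
  obtain N where N: "\<forall>n\<ge>N.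
   (ln (real n))^3 \<le> 4 powr (3 * ln (ln (real n)) - 1) \<and>
   (ln (real n))^3 + 3 * ln (ln (real n)) + 2 \<le> sqrt (real n) \<and>
   3 * ln (ln (real n)) + 2 \<le> 8 * ln (real n) \<and>
   2 \<le> ln (ln (real n)) \<and> 1 \<le> ln (real n)" using asym_all by blast
  show ?thesis
  proof (intro exI[of _ N] allI impI)
    fix n d V E S e
    assume n: "N \<le> n"
    assume H: "10 \<le> d \<and> real d \<le> 10 * ln (real n) \<and>
    is_graph V E \<and> card V = n \<and>
    card E \<le> d * n \<and>
    (\<forall>x\<in>V. \<forall>i\<le>n. real (card (sphere V E x i)) \<le> (2 * real d) ^ i * ln (real n)) \<and>
    (\<forall>U\<subseteq>V. real (card U) \<le> sqrt (real n) \<longrightarrow> spans E U \<le> 2 * card U) \<and>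
    (\<forall>U\<subseteq>V. real (card U) \<le> 10 * ln (ln (real n)) \<longrightarrow> spans E U \<le> card U) \<and>
    (\<forall>V' E'. subgraph V' E' V E \<and> min_deg_ge V' E' 10 \<longrightarrow>
       (\<forall>x\<in>V'. \<forall>i::nat. 1 \<le> i \<and> real i \<le> 10 * ln (ln (real n)) \<longrightarrow>
          2 ^ i \<le> card (sphere V' E' x i))) \<and>
    (\<forall>X Y. X \<subseteq> V \<and> Y \<subseteq> E \<and> real (card X + card Y) \<le> 20 * real d * ln (real n) \<longrightarrow>
       (\<forall>x\<in>V - X. \<forall>y\<in>V - X.
          (ln (real n)) ^ 3 \<le> real (card (ball (V - X) {f \<in> E - Y. f \<subseteq> V - X} x (lpar n))) \<and>
          (ln (real n)) ^ 3 \<le> real (card (ball (V - X) {f \<in> E - Y. f \<subseteq> V - X} y (lpar n))) \<longrightarrow>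
          (\<exists>p. is_path (V - X) {f \<in> E - Y. f \<subseteq> V - X} p \<and> hd p = x \<and> last p = y \<and>
               real (plen p) \<le> 2 * ln (real n)))) \<and>
    (\<forall>i<d. is_path (core_vertices V E 15) (induced E (core_vertices V E 15)) (S i) \<and>
             plen (S i) \<le> d) \<and>
    (\<forall>i<d. \<forall>j<d. i \<noteq> j \<longrightarrow> set (S i) \<inter> set (S j) = {}) \<and>
    (\<forall>i<d. \<forall>j<d. i \<noteq> j \<longrightarrow> (\<forall>x\<in>set (S i). \<forall>y\<in>set (S j).
         ball V E x (lpar n) \<inter> ball V E y (lpar n) = {})) \<and>
    (\<forall>i<d. e i \<in> path_edges (S i))"
    have N': "(ln (real n))^3 \<le> 4 powr (3 * ln (ln (real n)) - 1) \<and>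
   (ln (real n))^3 + 3 * ln (ln (real n)) + 2 \<le> sqrt (real n) \<and>
   3 * ln (ln (real n)) + 2 \<le> 8 * ln (real n) \<and>
   2 \<le> ln (ln (real n)) \<and> 1 \<le> ln (real n)" using N n by blast
    have asm: "gctx n d V E S e" unfolding gctx_def using H N'
      by (elim conjE) (intro conjI; assumption)
    interpret gctx n d V E S e by (rule asm)
    show "\<exists>P. is_path V E P \<and> e ` {..<d} \<subseteq> path_edges P \<and>
            path_edges P \<inter> (\<Union>i<d. path_edges (S i)) \<subseteq> e ` {..<d}" by (rule concl)
  qed
qed

end
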